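(* Let $d\ge1$, $\delta>0$, $L>0$, and let $F$ be a real-valued function that is continuously differentiable on an open set containing $[-\delta,1+\delta]^d$ and whose gradient is $L$-Lipschitz on $[-\delta,1+\delta]^d$. Then for every $\epsilon>0$ there exist integers $n_1,n_2\ge1$, scalars $t_1,t_2>0$, matrices $\boldsymbol{W}_k\in\mathbb{R}^{n_k\times d}$ and vectors $\boldsymbol{a}_k\in\mathbb{R}^{n_k}$, $\boldsymbol{c}_k\in\mathbb{R}^d$ ($k=1,2$) such that, with $g_k(\boldsymbol{x})=\boldsymbol{W}_k^\top\mathrm{softmax}(t_k(\boldsymbol{W}_k\boldsymbol{x}+\boldsymbol{a}_k))+\boldsymbol{c}_k$, $$\sup_{\boldsymbol{x}\in[0,1]^d}\|\nabla F(\boldsymbol{x})-(g_1(\boldsymbol{x})-g_2(\boldsymbol{x}))\|<\epsilon .$$ Moreover $g_1-g_2$ is the gradient of a $C^1$ function on $\mathbb{R}^d$.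
   Context: $\mathrm{softmax}(\boldsymbol{z})_i=e^{z_i}/\sum_j e^{z_j}$. $\|\cdot\|$ is the Euclidean norm. *)

theory Defs
  imports "HOL-Analysis.Analysis"
begin

definition softmax :: "nat \<Rightarrow> (nat \<Rightarrow> real) \<Rightarrow> nat \<Rightarrow> real" where
  "softmax n z i = exp (z i) / (\<Sum>j<n. exp (z j))"

text \<open>The map x |-> W^T softmax(t (W x + a)) + c, where the n x d matrix W is given by
  its rows W 0, ..., W (n-1) :: real^'d and a = (a 0, ..., a (n-1)).\<close>
definition softmax_net ::
  "nat \<Rightarrow> (nat \<Rightarrow> real^'d) \<Rightarrow> (nat \<Rightarrow> real) \<Rightarrow> real^'d \<Rightarrow> real \<Rightarrow> real^'d \<Rightarrow> real^'d" where
  "softmax_net n W a c t x =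
     (\<Sum>i<n. softmax n (\<lambda>j. t * (W j \<bullet> x + a j)) i *\<^sub>R W i) + c"

definition cube :: "real \<Rightarrow> real \<Rightarrow> (real^'d) set" where
  "cube lo hi = {x. \<forall>i. lo \<le> x $ i \<and> x $ i \<le> hi}"

end

theory Submission
  imports Defs
begin

lemma convex_cube: "convex (cube lb ub :: (real^'d) set)"
proof (unfold convex_def, intro ballI allI impI)
  fix x y :: "real^'d" and u v :: real
  assume x: "x \<in> cube lb ub" and y: "y \<in> cube lb ub" and uv: "0 \<le> u" "0 \<le> v" "u + v = 1"
  show "u *\<^sub>R x + v *\<^sub>R y \<in> cube lb ub"
    unfolding cube_def
  proof (intro CollectI allI conjI)
    fix i
    have a: "lb \<le> x$i" "x$i \<le> ub" "lb \<le> y$i" "y$i \<le> ub" using x y by (auto simp: cube_def)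
    have "u * lb \<le> u * (x$i)" "v * lb \<le> v * (y$i)" "u * (x$i) \<le> u * ub" "v * (y$i) \<le> v * ub"
      using a uv by (auto intro: mult_left_mono)
    moreover have "lb = u * lb + v * lb" "ub = u * ub+v * ub" using uv by (metis distrib_left mult.commute mult_1_right)+
    ultimately show "lb \<le> (u *\<^sub>R x + v *\<^sub>R y) $ i" "(u *\<^sub>R x + v *\<^sub>R y) $ i \<le> ub" by simp_all
  qed
qed

lemma onorm_inner_le: "onorm (\<lambda>h. (w::'a::real_inner) \<bullet> h) \<le> norm w"
  by (rule onorm_bound) (auto simp: Cauchy_Schwarz_ineq2)

lemma taylor_bound:
  fixes F :: "real^'d \<Rightarrow> real" and G :: "real^'d \<Rightarrow> real^'d" and S :: "(real^'d) set"
  assumes S: "convex S" and der: "\<And>z. z \<in> S \<Longrightarrow> (F has_derivative (\<lambda>h. G z \<bullet> h)) (at z)"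
    and lip: "\<And>z w. z \<in> S \<Longrightarrow> w \<in> S \<Longrightarrow> norm (G z - G w) \<le> L * norm (z - w)"
    and x: "x \<in> S" and y: "y \<in> S" and L: "L \<ge> 0"
  shows "\<bar>F x - F y - G y \<bullet> (x - y)\<bar> \<le> L * (norm (x - y))^2"
proof -
  let ?T = "closed_segment y x"
  have TS: "?T \<subseteq> S" using S x y by (simp add: closed_segment_subset)
  have "norm ((\<lambda>z. F z - G y \<bullet> z) x - (\<lambda>z. F z - G y \<bullet> z) y) \<le> (L * norm (x - y)) * norm (x - y)"
  proof (rule differentiable_bound[where f' = "\<lambda>z h. (G z - G y) \<bullet> h"])
    show "convex ?T" by simp
    fix z assume z: "z \<in> ?T"
    have "((\<lambda>z. F z - G y \<bullet> z) has_derivative (\<lambda>h. G z \<bullet> h - G y \<bullet> h)) (at z)"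
      using der[of z] z TS by (auto intro!: derivative_eq_intros)
    then show "((\<lambda>z. F z - G y \<bullet> z) has_derivative (\<lambda>h. (G z - G y) \<bullet> h)) (at z within ?T)"
      by (simp add: inner_diff_left has_derivative_at_withinI)
    have "onorm (\<lambda>h. (G z - G y) \<bullet> h) \<le> norm (G z - G y)" by (rule onorm_inner_le)
    also have "\<dots> \<le> L * norm (z - y)" using lip[of z y] z TS y by auto
    also have "\<dots> \<le> L * norm (x - y)"
      using z L by (auto intro!: mult_left_mono simp: dist_norm[symmetric] dist_commute dest: dist_in_closed_segment)
    finally show "onorm (\<lambda>h. (G z - G y) \<bullet> h) \<le> L * norm (x - y)" .
  qed auto
  then show ?thesis by (simp add: power2_eq_square inner_diff_right algebra_simps)
qed


lemma softmax_avg: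
  fixes u :: "nat \<Rightarrow> 'a::real_normed_vector" and g :: "nat \<Rightarrow> real"
  assumes i0: "i0 < n" "g i0 \<le> \<eta>" and t: "t > 0"
    and near: "\<And>i. i < n \<Longrightarrow> g i \<le> R \<Longrightarrow> norm (u i - u0) \<le> e1"
    and far: "\<And>i. i < n \<Longrightarrow> norm (u i - u0) \<le> B" and e1: "e1 \<ge> 0"
  shows "norm ((\<Sum>i<n. (exp (- t * g i) / (\<Sum>j<n. exp (- t * g j))) *\<^sub>R u i) - u0)
           \<le> e1 + real n * B * exp (- t * (R - \<eta>))"
proof -
  define S where "S = (\<Sum>j<n. exp (- t * g j))"
  define p where "p i = exp (- t * g i) / S" for i
  have S_ge: "S \<ge> exp (- t * \<eta>)"
  proof -
    have "exp (- t * \<eta>) \<le> exp (- t * g i0)" using i0 t by simp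
    also have "\<dots> \<le> S" unfolding S_def using i0 by (intro member_le_sum) auto
    finally show ?thesis .
  qed
  have Spos: "S > 0" by (rule less_le_trans[OF exp_gt_zero S_ge])
  have p_nonneg: "p i \<ge> 0" for i using Spos by (simp add: p_def)
  have psum: "(\<Sum>i<n. p i) = 1" using Spos by (simp add: p_def S_def flip: sum_divide_distrib)
  have B0: "B \<ge> 0" using far[OF i0(1)] by (meson norm_ge_zero order_trans)
  have "(\<Sum>i<n. p i *\<^sub>R (u i - u0)) = (\<Sum>i<n. p i *\<^sub>R u i) - (\<Sum>i<n. p i) *\<^sub>R u0"
    by (simp add: scaleR_diff_right sum_subtractf scaleR_sum_left)
  hence "(\<Sum>i<n. p i *\<^sub>R u i) - u0 = (\<Sum>i<n. p i *\<^sub>R (u i - u0))" using psum by simp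
  hence "norm ((\<Sum>i<n. p i *\<^sub>R u i) - u0) \<le> (\<Sum>i<n. p i * norm (u i - u0))"
    using p_nonneg by (auto intro!: order_trans[OF norm_sum] sum_mono)
  also have "\<dots> \<le> (\<Sum>i<n. p i * e1 + B * exp (- t * (R - \<eta>)))"
  proof (intro sum_mono)
    fix i assume i: "i \<in> {..<n}"
    show "p i * norm (u i - u0) \<le> p i * e1 + B * exp (- t * (R - \<eta>))"
    proof (cases "g i \<le> R")
      case True
      have "p i * norm (u i - u0) \<le> p i * e1" using near[of i] i True p_nonneg[of i] by (intro mult_left_mono) auto
      moreover have "0 \<le> B * exp (- t * (R - \<eta>))" using B0 by simp
      ultimately show ?thesis by linarith
    next
      case False
      have "p i \<le> exp (- t * R) / exp (- t * \<eta>)"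
        unfolding p_def
      proof (rule frac_le)
        show "exp (- t * g i) \<le> exp (- t * R)" using False t by simp
      qed (use S_ge in auto)
      also have "\<dots> = exp (- t * (R - \<eta>))" by (simp add: exp_diff[symmetric] algebra_simps)
      finally have "p i \<le> exp (- t * (R - \<eta>))" .
      hence "p i * norm (u i - u0) \<le> exp (- t * (R - \<eta>)) * B"
        using far[of i] i p_nonneg[of i] by (intro mult_mono) auto
      moreover have "0 \<le> p i * e1" using p_nonneg[of i] e1 by simp
      ultimately show ?thesis by (simp add: mult.commute)
    qed
  qed
  also have "\<dots> = e1 + real n * B * exp (- t * (R - \<eta>))"
    by (simp add: sum.distrib psum flip: sum_distrib_right)
  finally show ?thesis by (simp add: p_def S_def)
qed

lemma softmax_rewrite:
  assumes "\<And>j. j < n \<Longrightarrow> W j \<bullet> x + a j = \<Phi> - g j" and "i < n"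
  shows "softmax n (\<lambda>j. t * (W j \<bullet> x + a j)) i = exp (- t * g i) / (\<Sum>j<n. exp (- t * g j))"
proof -
  have e: "exp (t * (W j \<bullet> x + a j)) = exp (t * \<Phi>) * exp (- t * g j)" if "j < n" for j
    proof -
    have "t * (W j \<bullet> x + a j) = t * \<Phi> + (- t * g j)" using assms(1)[OF that] by (simp add: right_diff_distrib)
    then show ?thesis by (metis exp_add)
  qed
  have "softmax n (\<lambda>j. t * (W j \<bullet> x + a j)) i
     = (exp (t * \<Phi>) * exp (- t * g i)) / (exp (t * \<Phi>) * (\<Sum>j<n. exp (- t * g j)))"
    unfolding softmax_def using e assms(2) by (simp add: sum_distrib_left)
  also have "\<dots> = exp (- t * g i) / (\<Sum>j<n. exp (- t * g j))" by simp
  finally show ?thesis .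
qed


lemma softmax_net_deriv:
  fixes W :: "nat \<Rightarrow> real^'d"
  assumes n: "n \<ge> 1" and t: "t > 0"
  shows "((\<lambda>x. ln (\<Sum>j<n. exp (t * (W j \<bullet> x + a j))) / t + c \<bullet> x) has_derivative
          (\<lambda>h. softmax_net n W a c t x \<bullet> h)) (at x)"
proof -
  define S where "S = (\<Sum>j<n. exp (t * (W j \<bullet> x + a j)))"
  have Spos: "S > 0" unfolding S_def using n by (intro sum_pos) (auto simp: lessThan_empty_iff)
  have "((\<lambda>x. ln (\<Sum>j<n. exp (t * (W j \<bullet> x + a j))) / t + c \<bullet> x) has_derivative
          (\<lambda>h. (1 / S * (\<Sum>j<n. exp (t * (W j \<bullet> x + a j)) * (t * (W j \<bullet> h + 0)))) / t + c \<bullet> h)) (at x)"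
    using Spos t unfolding S_def
    apply (intro derivative_eq_intros)
    apply (auto intro!: ext simp: divide_simps ac_simps)
    done
  moreover have "(\<lambda>h. (1 / S * (\<Sum>j<n. exp (t * (W j \<bullet> x + a j)) * (t * (W j \<bullet> h + 0)))) / t + c \<bullet> h)
      = (\<lambda>h. softmax_net n W a c t x \<bullet> h)"
    using t unfolding softmax_net_def softmax_def S_def
    by (auto simp: inner_add_left inner_sum_left sum_divide_distrib sum_distrib_left intro!: ext sum.cong)
  ultimately show ?thesis by simp
qed


lemma softmax_net_cont:
  fixes W :: "nat \<Rightarrow> real^'d"
  assumes n: "n \<ge> 1"
  shows "continuous_on UNIV (softmax_net n W a c t)"
proof -
  have "(\<Sum>j<n. exp (t * (W j \<bullet> x + a j))) \<noteq> 0" for x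
  proof -
    have "(\<Sum>j<n. exp (t * (W j \<bullet> x + a j))) > 0" using n by (intro sum_pos) (auto simp: lessThan_empty_iff)
    then show ?thesis by simp
  qed
  then show ?thesis unfolding softmax_net_def[abs_def] softmax_def
    by (auto intro!: continuous_intros)
qed


lemma net_error:
  fixes W :: "nat \<Rightarrow> real^'d"
  assumes i0: "i0 < n" "g i0 \<le> \<eta>" and t: "t > 0"
    and eq: "\<And>j. j < n \<Longrightarrow> W j \<bullet> x + a j = \<Phi> - g j"
    and near: "\<And>i. i < n \<Longrightarrow> g i \<le> R \<Longrightarrow> norm (W i - u0) \<le> e1"
    and far: "\<And>i. i < n \<Longrightarrow> norm (W i - u0) \<le> B" and e1: "e1 \<ge> 0"
  shows "norm (softmax_net n W a 0 t x - u0) \<le> e1 + real n * B * exp (- t * (R - \<eta>))"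
proof -
  have "softmax_net n W a 0 t x = (\<Sum>i<n. (exp (- t * g i) / (\<Sum>j<n. exp (- t * g j))) *\<^sub>R W i)"
    unfolding softmax_net_def using softmax_rewrite[OF eq] by simp
  then show ?thesis using softmax_avg[of i0 n g \<eta> t R W u0 e1 B, OF i0 t near far e1] by simp
qed

lemma norm_sq_le_comp:
  fixes x y :: "real^'d"
  assumes "\<And>k. \<bar>x$k - y$k\<bar> \<le> r"
  shows "(norm (x - y))^2 \<le> real CARD('d) * r^2"
proof -
  have "(norm (x - y))^2 = (\<Sum>k\<in>UNIV. (x$k - y$k)^2)"
    unfolding power2_norm_eq_inner inner_vec_def by (simp add: power2_eq_square)
  also have "\<dots> \<le> (\<Sum>k\<in>(UNIV::'d set). r^2)"
  proof (rule sum_mono)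
    fix k :: 'd
    have "\<bar>x$k - y$k\<bar>^2 \<le> r^2" using assms[of k] by (intro power_mono) auto
    then show "(x$k - y$k)^2 \<le> r^2" by simp
  qed
  also have "\<dots> = real CARD('d) * r^2" by simp
  finally show ?thesis .
qed

lemma cube_diam:
  fixes x y :: "real^'d"
  assumes "x \<in> cube 0 1" "y \<in> cube 0 1"
  shows "(norm (x - y))^2 \<le> real CARD('d)" and "norm (x - y) \<le> real CARD('d)"
proof -
  have "\<bar>x$k - y$k\<bar> \<le> 1" for k
  proof -
    have "0 \<le> x$k" "x$k \<le> 1" "0 \<le> y$k" "y$k \<le> 1" using assms by (auto simp: cube_def)
    then show ?thesis by (simp add: abs_le_iff)
  qed
  then show sq: "(norm (x - y))^2 \<le> real CARD('d)" using norm_sq_le_comp[of x y 1] by simp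
  have D1: "real CARD('d) \<ge> 1" by (simp add: Suc_leI)
  hence "real CARD('d) \<le> (real CARD('d))^2" by (simp add: power2_eq_square)
  hence "(norm (x - y))^2 \<le> (real CARD('d))^2" using sq by linarith
  then show "norm (x - y) \<le> real CARD('d)" by (rule power2_le_imp_le) simp
qed

lemma grid_exists:
  fixes m :: nat
  assumes m: "m \<ge> 1"
  shows "\<exists>P::(real^'d) set. finite P \<and> P \<noteq> {} \<and> P \<subseteq> cube 0 1 \<and>
           (\<forall>x\<in>cube 0 1. \<exists>y\<in>P. \<forall>k. \<bar>x$k - y$k\<bar> \<le> 1 / real m)"
proof -
  define S where "S = (\<lambda>j. real j / real m) ` {..m}"
  define P where "P = (\<lambda>f. vec_lambda f :: real^'d) ` (PiE UNIV (\<lambda>_. S))"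
  have fin: "finite P" unfolding P_def S_def by (intro finite_imageI finite_PiE) auto
  have sub: "P \<subseteq> cube 0 1"
  proof
    fix y assume "y \<in> P"
    then obtain f where f: "f \<in> PiE UNIV (\<lambda>_. S)" and y: "y = vec_lambda f" unfolding P_def by auto
    have "f k \<in> S" for k using f by auto
    have "0 \<le> f k \<and> f k \<le> 1" for k
    proof -
      obtain j where j: "j \<le> m" "f k = real j / real m" using \<open>f k \<in> S\<close> unfolding S_def by auto
      have mp: "real m > 0" using m by simp
      have "real j / real m \<le> 1" using j(1) mp by (simp add: divide_simps)
      then show ?thesis using j(2) mp by simp
    qed
    then show "y \<in> cube 0 1" unfolding cube_def y by simp
  qed
  have cover: "\<exists>y\<in>P. \<forall>k. \<bar>x$k - y$k\<bar> \<le> 1 / real m" if x: "x \<in> cube 0 1" for x :: "real^'d"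
  proof -
    define j where "j k = nat \<lfloor>real m * x$k\<rfloor>" for k
    have x01: "0 \<le> x$k" "x$k \<le> 1" for k using x by (auto simp: cube_def)
    have jm: "j k \<le> m" for k
    proof -
      have "real m * x$k \<le> real m" using x01[of k] by (simp add: mult_left_le)
      then have "\<lfloor>real m * x$k\<rfloor> \<le> int m" by (metis floor_le_iff of_int_of_nat_eq floor_of_nat floor_mono)
      then show ?thesis unfolding j_def by simp
    qed
    have jb: "real (j k) \<le> real m * x$k" "real m * x$k < real (j k) + 1" for k
    proof -
      have nn: "0 \<le> \<lfloor>real m * x$k\<rfloor>" using x01[of k] by simp
      have "real (j k) = real_of_int \<lfloor>real m * x$k\<rfloor>" unfolding j_def using nn by simp
      then show "real (j k) \<le> real m * x$k" "real m * x$k < real (j k) + 1" by linarith+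
    qed
    define y where "y = (\<chi> k. real (j k) / real m)"
    have "(\<lambda>k. real (j k) / real m) \<in> PiE UNIV (\<lambda>_. S)" unfolding S_def using jm by auto
    then have yP: "y \<in> P" unfolding P_def y_def by auto
    have "\<bar>x$k - y$k\<bar> \<le> 1 / real m" for k
    proof -
      have mpos: "real m > 0" using m by simp
      have "y$k = real (j k) / real m" unfolding y_def by simp
      moreover have "real (j k) / real m \<le> x$k" using jb(1)[of k] mpos by (simp add: divide_simps mult.commute)
      moreover have "x$k < real (j k) / real m + 1 / real m" using jb(2)[of k] mpos
        by (simp add: divide_simps mult.commute)
      ultimately show ?thesis by simp
    qed
    then show ?thesis using yP by blast
  qed
  have "0 \<in> cube 0 (1::real)" by (simp add: cube_def)
  then have "P \<noteq> {}" using cover by blast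
  with fin sub cover show ?thesis by blast
qed

theorem theorem2:
  fixes F :: "real^'d \<Rightarrow> real" and G :: "real^'d \<Rightarrow> real^'d"
    and U :: "(real^'d) set" and \<delta> L :: real
  assumes "\<delta> > 0" and "L > 0"
    and "open U" and "cube (-\<delta>) (1 + \<delta>) \<subseteq> U"
    and "\<And>x. x \<in> U \<Longrightarrow> (F has_derivative (\<lambda>h. G x \<bullet> h)) (at x)"
    and "continuous_on U G"
    and "\<And>x y. x \<in> cube (-\<delta>) (1 + \<delta>) \<Longrightarrow> y \<in> cube (-\<delta>) (1 + \<delta>) \<Longrightarrow>
           norm (G x - G y) \<le> L * norm (x - y)"
  shows "\<forall>\<epsilon>>0. \<exists>n1 n2 :: nat. \<exists>t1 t2 :: real. \<exists>W1 W2 :: nat \<Rightarrow> real^'d.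
           \<exists>a1 a2 :: nat \<Rightarrow> real. \<exists>c1 c2 :: real^'d.
           n1 \<ge> 1 \<and> n2 \<ge> 1 \<and> t1 > 0 \<and> t2 > 0 \<and>
           (SUP x\<in>cube 0 1. norm (G x - (softmax_net n1 W1 a1 c1 t1 x - softmax_net n2 W2 a2 c2 t2 x))) < \<epsilon> \<and>
           (\<exists>H :: real^'d \<Rightarrow> real.
              (\<forall>x. (H has_derivative
                     (\<lambda>h. (softmax_net n1 W1 a1 c1 t1 x - softmax_net n2 W2 a2 c2 t2 x) \<bullet> h)) (at x)) \<and>
              continuous_on UNIV (\<lambda>x. softmax_net n1 W1 a1 c1 t1 x - softmax_net n2 W2 a2 c2 t2 x))"
proof (intro allI impI)
  fix \<epsilon> :: real assume eps: "\<epsilon> > 0"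
  note L = \<open>L > 0\<close>
  define C where "C = (cube 0 1 :: (real^'d) set)"
  have C_sub: "C \<subseteq> cube (-\<delta>) (1 + \<delta>)"
  proof (rule subsetI)
    fix x assume "x \<in> C"
    hence h: "\<forall>i. 0 \<le> x$i \<and> x$i \<le> 1" by (simp add: C_def cube_def)
    show "x \<in> cube (-\<delta>) (1 + \<delta>)" unfolding cube_def
    proof (intro CollectI allI)
      fix i show "-\<delta> \<le> x$i \<and> x$i \<le> 1 + \<delta>" using h[rule_format, of i] \<open>\<delta> > 0\<close> by linarith
    qed
  qed
  have C_U: "C \<subseteq> U" using C_sub assms(4) by auto
  define D where "D = real CARD('d)"
  have D1: "D \<ge> 1" unfolding D_def by (simp add: Suc_leI)
  define M where "M = 2 * L + 2"
  define K where "K = L + M"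
  have Kpos: "K > 0" "M \<le> K" "M \<ge> 2" using L unfolding K_def M_def by auto
  define \<phi> where "\<phi> x = F x + M / 2 * (x \<bullet> x)" for x :: "real^'d"
  define v where "v y = G y + M *\<^sub>R y" for y :: "real^'d"
  define gap where "gap x y = \<phi> x - \<phi> y - v y \<bullet> (x - y)" for x y :: "real^'d"
  have quad: "M / 2 * (x \<bullet> x) - M / 2 * (y \<bullet> y) - (M *\<^sub>R y) \<bullet> (x - y) = M / 2 * (norm (x - y))^2"
    for x y :: "real^'d"
    by (simp add: power2_norm_eq_inner inner_diff_left inner_diff_right inner_commute algebra_simps)
  have gap_bounds: "(norm (x - y))^2 \<le> gap x y \<and> gap x y \<le> (2 * L + 1) * (norm (x - y))^2"
    if x: "x \<in> C" and y: "y \<in> C" for x y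
  proof -
    have T: "\<bar>F x - F y - G y \<bullet> (x - y)\<bar> \<le> L * (norm (x - y))^2"
    proof (rule taylor_bound[where S = C])
      show "convex C" unfolding C_def by (rule convex_cube)
      show "\<And>z. z \<in> C \<Longrightarrow> (F has_derivative (\<bullet>) (G z)) (at z)" using assms(5) C_U by auto
      show "\<And>z w. z \<in> C \<Longrightarrow> w \<in> C \<Longrightarrow> norm (G z - G w) \<le> L * norm (z - w)"
        using assms(7) C_sub by auto
    qed (use x y L in auto)
    have "gap x y = (F x - F y - G y \<bullet> (x - y)) + M / 2 * (norm (x - y))^2"
      unfolding gap_def \<phi>_def v_def using quad[of x y] by (simp add: inner_add_left algebra_simps)
    also have "\<dots> = (F x - F y - G y \<bullet> (x - y)) + L * (norm (x - y))^2 + (norm (x - y))^2"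
      unfolding M_def by (simp add: algebra_simps)
    finally have g: "gap x y = (F x - F y - G y \<bullet> (x - y)) + L * (norm (x - y))^2 + (norm (x - y))^2" .
    have T2: "- (L * (norm (x - y))^2) \<le> F x - F y - G y \<bullet> (x - y)"
             "F x - F y - G y \<bullet> (x - y) \<le> L * (norm (x - y))^2" using T by (simp_all add: abs_le_iff)
    have e: "(2 * L + 1) * (norm (x - y))^2 = 2 * (L * (norm (x - y))^2) + (norm (x - y))^2"
      by (simp add: algebra_simps)
    show ?thesis using g T2 e by linarith
  qed
  have v_lip: "norm (v x - v y) \<le> K * norm (x - y)" if "x \<in> C" "y \<in> C" for x y
  proof -
    have "v x - v y = (G x - G y) + M *\<^sub>R (x - y)" unfolding v_def by (simp add: algebra_simps)
    hence "norm (v x - v y) \<le> norm (G x - G y) + norm (M *\<^sub>R (x - y))" by (metis norm_triangle_ineq)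
    also have "\<dots> \<le> L * norm (x - y) + M * norm (x - y)"
      using assms(7)[of x y] that C_sub Kpos by auto
    finally show ?thesis unfolding K_def by (simp add: algebra_simps)
  qed
  define r where "r = \<epsilon> / (8 * K)"
  have rpos: "r > 0" unfolding r_def using eps Kpos by simp
  define R where "R = r^2"
  have Rpos: "R > 0" unfolding R_def using rpos by simp
  define \<eta> where "\<eta> = R / 2"
  have Kr: "K * r = \<epsilon> / 8" unfolding r_def using Kpos by simp
  define m :: nat where "m = nat \<lceil>2 * (2 * L + 1) * D / R\<rceil> + 1"
  have m1: "m \<ge> 1" unfolding m_def by simp
  have mbig: "real m \<ge> 2 * (2 * L + 1) * D / R" unfolding m_def by linarith
  have mesh: "(2 * L + 1) * (D * (1 / real m)^2) \<le> \<eta>"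
  proof -
    have mp: "real m > 0" using m1 by simp
    have "real m \<le> (real m)^2" using m1 by (simp add: power2_eq_square)
    hence "2 * (2 * L + 1) * D / R \<le> (real m)^2" using mbig by linarith
    hence "2 * (2 * L + 1) * D \<le> R * (real m)^2" using Rpos by (simp add: divide_simps mult.commute)
    then show ?thesis unfolding \<eta>_def using mp by (simp add: divide_simps power2_eq_square algebra_simps)
  qed
  obtain P :: "(real^'d) set" where P: "finite P" "P \<noteq> {}" "P \<subseteq> C"
      "\<And>x. x \<in> C \<Longrightarrow> \<exists>y\<in>P. \<forall>k. \<bar>x$k - y$k\<bar> \<le> 1 / real m"
    using grid_exists[OF m1] unfolding C_def by blast
  obtain n :: nat and Y where nY: "P = Y ` {i. i < n}" using finite_imp_nat_seg_image_inj_on[OF P(1)] by auto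
  have n1: "n \<ge> 1" using P(2) nY by (cases n) auto
  have YC: "Y i \<in> C" if "i < n" for i using that nY P(3) by auto
  have Ynear: "\<exists>i<n. (norm (x - Y i))^2 \<le> D * (1 / real m)^2" if xC: "x \<in> C" for x
  proof -
    obtain y where "y \<in> P" "\<forall>k. \<bar>x$k - y$k\<bar> \<le> 1 / real m" using P(4)[OF xC] by blast
    then show ?thesis using nY norm_sq_le_comp[of x y "1 / real m"] unfolding D_def by blast
  qed
  define B where "B = K * D"
  define A where "A = 8 * real n * B / \<epsilon> + 1"
  have Bpos: "B > 0" unfolding B_def using Kpos D1 by simp
  have A1: "A > 1" unfolding A_def using Bpos n1 eps by simp
  define t where "t = 2 * ln A / R + 1"
  have tpos: "t > 0" unfolding t_def using A1 Rpos by (simp add: add_pos_nonneg)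
  have tail: "real n * B * exp (- t * (R - \<eta>)) \<le> \<epsilon> / 8"
  proof -
    have "t * (R - \<eta>) = t * R / 2" unfolding \<eta>_def by simp
    also have "\<dots> \<ge> ln A" unfolding t_def using Rpos A1 by (simp add: field_simps)
    finally have "exp (t * (R - \<eta>)) \<ge> A" using A1 by (metis exp_ln exp_le_cancel_iff less_trans zero_less_one)
    hence "exp (- t * (R - \<eta>)) \<le> 1 / A" using A1 by (simp add: exp_minus divide_simps)
    hence "real n * B * exp (- t * (R - \<eta>)) \<le> real n * B * (1 / A)" using Bpos
      by (intro mult_left_mono) auto
    also have "\<dots> = real n * B / A" by simp
    also have "\<dots> \<le> \<epsilon> / 8"
    proof -
      have "real n * B \<le> \<epsilon> / 8 * A" unfolding A_def using eps by (simp add: field_simps)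
      then show ?thesis using A1 by (simp add: divide_simps)
    qed
    finally show ?thesis .
  qed
  define W1 where "W1 i = v (Y i)" for i
  define a1 where "a1 i = \<phi> (Y i) - v (Y i) \<bullet> Y i" for i
  define W2 where "W2 i = M *\<^sub>R Y i" for i
  define a2 where "a2 i = - (M / 2 * (Y i \<bullet> Y i))" for i
  have err1: "norm (softmax_net n W1 a1 0 t x - v x) \<le> \<epsilon> / 4" if x: "x \<in> C" for x
  proof -
    obtain i0 where i0: "i0 < n" "(norm (x - Y i0))^2 \<le> D * (1 / real m)^2" using Ynear[OF x] by blast
    have "norm (softmax_net n W1 a1 0 t x - v x) \<le> \<epsilon> / 8 + real n * B * exp (- t * (R - \<eta>))"
    proof (rule net_error[where g = "\<lambda>i. gap x (Y i)" and \<Phi> = "\<phi> x"])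
      show "i0 < n" by fact
      have "(2 * L + 1) * (norm (x - Y i0))^2 \<le> (2 * L + 1) * (D * (1 / real m)^2)"
        using i0(2) L by (intro mult_left_mono) auto
      then show "gap x (Y i0) \<le> \<eta>" using gap_bounds[OF x YC[OF i0(1)]] mesh by linarith
      show "t > 0" by fact
      show "W1 j \<bullet> x + a1 j = \<phi> x - gap x (Y j)" if "j < n" for j
        unfolding W1_def a1_def gap_def by (simp add: inner_diff_right)
      show "norm (W1 i - v x) \<le> \<epsilon> / 8" if "i < n" "gap x (Y i) \<le> R" for i
      proof -
        have "(norm (x - Y i))^2 \<le> r^2" using gap_bounds[OF x YC[OF that(1)]] that(2) unfolding R_def by linarith
        hence "norm (x - Y i) \<le> r" by (rule power2_le_imp_le[OF _ less_imp_le[OF rpos]])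
        hence "K * norm (x - Y i) \<le> K * r" using Kpos by (intro mult_left_mono) auto
        moreover have "norm (W1 i - v x) \<le> K * norm (x - Y i)" unfolding W1_def
          using v_lip[OF YC[OF that(1)] x] by (metis norm_minus_commute)
        ultimately show ?thesis using Kr by linarith
      qed
      show "norm (W1 i - v x) \<le> B" if "i < n" for i
      proof -
        have "norm (x - Y i) \<le> D" unfolding D_def using x YC[OF that] unfolding C_def by (rule cube_diam(2))
        hence "K * norm (x - Y i) \<le> K * D" using Kpos by (intro mult_left_mono) auto
        moreover have "norm (W1 i - v x) \<le> K * norm (x - Y i)" unfolding W1_def
          using v_lip[OF YC[OF that] x] by (metis norm_minus_commute)
        ultimately show ?thesis unfolding B_def by linarith
      qed
      show "\<epsilon> / 8 \<ge> 0" using eps by simp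
    qed
    then show ?thesis using tail by linarith
  qed
  have err2: "norm (softmax_net n W2 a2 0 t x - M *\<^sub>R x) \<le> \<epsilon> / 4" if x: "x \<in> C" for x
  proof -
    obtain i0 where i0: "i0 < n" "(norm (x - Y i0))^2 \<le> D * (1 / real m)^2" using Ynear[OF x] by blast
    have "norm (softmax_net n W2 a2 0 t x - M *\<^sub>R x) \<le> \<epsilon> / 8 + real n * B * exp (- t * (R - \<eta>))"
    proof (rule net_error[where g = "\<lambda>i. M / 2 * (norm (x - Y i))^2" and \<Phi> = "M / 2 * (x \<bullet> x)"])
      show "i0 < n" by fact
      have "M / 2 \<le> 2 * L + 1" unfolding M_def using L by simp
      hence "M / 2 * (norm (x - Y i0))^2 \<le> (2 * L + 1) * (D * (1 / real m)^2)"
        using i0(2) Kpos by (intro mult_mono) auto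
      then show "M / 2 * (norm (x - Y i0))^2 \<le> \<eta>" using mesh by linarith
      show "t > 0" by fact
      show "W2 j \<bullet> x + a2 j = M / 2 * (x \<bullet> x) - M / 2 * (norm (x - Y j))^2" if "j < n" for j
        unfolding W2_def a2_def using quad[of x "Y j"]
        by (simp add: power2_norm_eq_inner inner_diff_left inner_diff_right inner_commute algebra_simps)
      have W2d: "norm (W2 i - M *\<^sub>R x) \<le> K * norm (x - Y i)" for i
      proof -
        have "norm (W2 i - M *\<^sub>R x) = M * norm (x - Y i)" unfolding W2_def using Kpos
          by (simp add: scaleR_diff_right[symmetric] norm_minus_commute)
        then show ?thesis using Kpos by (simp add: mult_right_mono)
      qed
      show "norm (W2 i - M *\<^sub>R x) \<le> \<epsilon> / 8" if "i < n" "M / 2 * (norm (x - Y i))^2 \<le> R" for i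
      proof -
        have "1 * (norm (x - Y i))^2 \<le> M / 2 * (norm (x - Y i))^2" using Kpos by (intro mult_right_mono) auto
        hence "(norm (x - Y i))^2 \<le> M / 2 * (norm (x - Y i))^2" by simp
        hence "(norm (x - Y i))^2 \<le> r^2" using that(2) unfolding R_def by linarith
        hence "norm (x - Y i) \<le> r" by (rule power2_le_imp_le[OF _ less_imp_le[OF rpos]])
        hence "K * norm (x - Y i) \<le> K * r" using Kpos by (intro mult_left_mono) auto
        then show ?thesis using Kr W2d[of i] by linarith
      qed
      show "norm (W2 i - M *\<^sub>R x) \<le> B" if "i < n" for i
      proof -
        have "norm (x - Y i) \<le> D" unfolding D_def using x YC[OF that] unfolding C_def by (rule cube_diam(2))
        hence "K * norm (x - Y i) \<le> K * D" using Kpos by (intro mult_left_mono) auto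
        then show ?thesis using W2d[of i] unfolding B_def by linarith
      qed
      show "\<epsilon> / 8 \<ge> 0" using eps by simp
    qed
    then show ?thesis using tail by linarith
  qed
  have pointwise: "norm (G x - (softmax_net n W1 a1 0 t x - softmax_net n W2 a2 0 t x)) \<le> \<epsilon> / 2"
    if x: "x \<in> C" for x
  proof -
    have "G x - (softmax_net n W1 a1 0 t x - softmax_net n W2 a2 0 t x)
        = (v x - softmax_net n W1 a1 0 t x) - (M *\<^sub>R x - softmax_net n W2 a2 0 t x)"
      unfolding v_def by (simp add: algebra_simps)
    hence "norm (G x - (softmax_net n W1 a1 0 t x - softmax_net n W2 a2 0 t x))
        \<le> norm (softmax_net n W1 a1 0 t x - v x) + norm (softmax_net n W2 a2 0 t x - M *\<^sub>R x)"
      by (metis norm_triangle_ineq4 norm_minus_commute)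
    then show ?thesis using err1[OF x] err2[OF x] by linarith
  qed
  have "(SUP x\<in>cube 0 1. norm (G x - (softmax_net n W1 a1 0 t x - softmax_net n W2 a2 0 t x))) \<le> \<epsilon> / 2"
  proof (rule cSUP_least)
    show "cube 0 1 \<noteq> ({} :: (real^'d) set)" unfolding cube_def by (auto intro!: exI[of _ 0])
  qed (use pointwise in \<open>auto simp: C_def\<close>)
  hence sup: "(SUP x\<in>cube 0 1. norm (G x - (softmax_net n W1 a1 0 t x - softmax_net n W2 a2 0 t x))) < \<epsilon>"
    using eps by linarith
  define H where "H x = (ln (\<Sum>j<n. exp (t * (W1 j \<bullet> x + a1 j))) / t + 0 \<bullet> x)
                      - (ln (\<Sum>j<n. exp (t * (W2 j \<bullet> x + a2 j))) / t + 0 \<bullet> x)" for x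
  have Hd: "\<forall>x. (H has_derivative
          (\<lambda>h. (softmax_net n W1 a1 0 t x - softmax_net n W2 a2 0 t x) \<bullet> h)) (at x)"
  proof
    fix x
    have "(H has_derivative (\<lambda>h. softmax_net n W1 a1 0 t x \<bullet> h - softmax_net n W2 a2 0 t x \<bullet> h)) (at x)"
      unfolding H_def[abs_def]
      by (intro has_derivative_diff softmax_net_deriv n1 tpos)
    then show "(H has_derivative
          (\<lambda>h. (softmax_net n W1 a1 0 t x - softmax_net n W2 a2 0 t x) \<bullet> h)) (at x)"
      by (simp add: inner_diff_left)
  qed
  have Hc: "continuous_on UNIV (\<lambda>x. softmax_net n W1 a1 0 t x - softmax_net n W2 a2 0 t x)"
    by (intro continuous_on_diff softmax_net_cont n1)
  show "\<exists>n1 n2 :: nat. \<exists>t1 t2 :: real. \<exists>W1 W2 :: nat \<Rightarrow> real^'d.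
           \<exists>a1 a2 :: nat \<Rightarrow> real. \<exists>c1 c2 :: real^'d.
           n1 \<ge> 1 \<and> n2 \<ge> 1 \<and> t1 > 0 \<and> t2 > 0 \<and>
           (SUP x\<in>cube 0 1. norm (G x - (softmax_net n1 W1 a1 c1 t1 x - softmax_net n2 W2 a2 c2 t2 x))) < \<epsilon> \<and>
           (\<exists>H :: real^'d \<Rightarrow> real.
              (\<forall>x. (H has_derivative
                     (\<lambda>h. (softmax_net n1 W1 a1 c1 t1 x - softmax_net n2 W2 a2 c2 t2 x) \<bullet> h)) (at x)) \<and>
              continuous_on UNIV (\<lambda>x. softmax_net n1 W1 a1 c1 t1 x - softmax_net n2 W2 a2 c2 t2 x))"
    apply (rule exI[of _ n], rule exI[of _ n], rule exI[of _ t], rule exI[of _ t])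
    apply (rule exI[of _ W1], rule exI[of _ W2], rule exI[of _ a1], rule exI[of _ a2])
    apply (rule exI[of _ 0], rule exI[of _ 0])
    using n1 tpos sup Hd Hc by auto
qed

end
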